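(* Let $\varphi$ be a flow on a locally compact metric space $X$, $S\subset X$ a nonempty compact invariant set, and $\mathcal M=\{M_p\mid p\in\mathbb P\}$ an indexed family of mutually disjoint closed invariant subsets of $S$. Then $\mathcal M$ is a Morse predecomposition of $S$ if and only if $T\cap\bigcup_{p\in\mathbb P}M_p\ne\emptyset$ for every nonempty closed invariant set $T\subset S$.
   Context: A full solution is a map $\gamma:\mathbb R\to X$ with $\gamma(s+t)=\varphi(\gamma(s),t)$; it is in $S$ if its image lies in $S$. $\alpha(\gamma)=\bigcap_{t<0}\operatorname{cl}\gamma((-\infty,t])$, $\omega(\gamma)=\bigcap_{t>0}\operatorname{cl}\gamma([t,\infty))$. A set $A$ is invariant if $A=\{x\in A\mid\varphi(x,\mathbb R)\subset A\}$. A full solution $\gamma$ in $S$ is a link from $S_1$ to $S_2$ if $\alpha(\gamma)\cap S_1\ne\emptyset\ne\omega(\gamma)\cap S_2$. A Morse predecomposition of $S$ is an indexed family of mutually disjoint closed invariant subsets $\{M_p\mid p\in\mathbb P\}$ of $S$ such that every full solution in $S$ is a link from $M_p$ to $M_q$ for some $p,q\in\mathbb P$. *)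

theory Defs
  imports "HOL-Analysis.Analysis"
begin

text \<open>The phase space X is the whole (metric space) type 'a; a flow is a continuous
  map phi : X x R -> X with phi x 0 = x and phi (phi x s) t = phi x (s + t).\<close>

definition is_flow :: "('a::metric_space \<Rightarrow> real \<Rightarrow> 'a) \<Rightarrow> bool" where
  "is_flow \<phi> \<longleftrightarrow> continuous_on UNIV (\<lambda>(x, t). \<phi> x t)
     \<and> (\<forall>x. \<phi> x 0 = x) \<and> (\<forall>x s t. \<phi> (\<phi> x s) t = \<phi> x (s + t))"

definition full_solution :: "('a \<Rightarrow> real \<Rightarrow> 'a) \<Rightarrow> (real \<Rightarrow> 'a) \<Rightarrow> bool" where
  "full_solution \<phi> \<gamma> \<longleftrightarrow> (\<forall>s t. \<gamma> (s + t) = \<phi> (\<gamma> s) t)"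

definition full_solution_in :: "('a \<Rightarrow> real \<Rightarrow> 'a) \<Rightarrow> 'a set \<Rightarrow> (real \<Rightarrow> 'a) \<Rightarrow> bool" where
  "full_solution_in \<phi> S \<gamma> \<longleftrightarrow> full_solution \<phi> \<gamma> \<and> range \<gamma> \<subseteq> S"

definition alpha_limit :: "(real \<Rightarrow> 'a::topological_space) \<Rightarrow> 'a set" where
  "alpha_limit \<gamma> = (\<Inter>t\<in>{t. t < 0}. closure (\<gamma> ` {..t}))"

definition omega_limit :: "(real \<Rightarrow> 'a::topological_space) \<Rightarrow> 'a set" where
  "omega_limit \<gamma> = (\<Inter>t\<in>{t. t > 0}. closure (\<gamma> ` {t..}))"

definition invariant :: "('a \<Rightarrow> real \<Rightarrow> 'a) \<Rightarrow> 'a set \<Rightarrow> bool" where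
  "invariant \<phi> A \<longleftrightarrow> A = {x \<in> A. \<phi> x ` UNIV \<subseteq> A}"

definition is_link :: "('a::topological_space \<Rightarrow> real \<Rightarrow> 'a) \<Rightarrow> 'a set \<Rightarrow> (real \<Rightarrow> 'a) \<Rightarrow> 'a set \<Rightarrow> 'a set \<Rightarrow> bool" where
  "is_link \<phi> S \<gamma> S1 S2 \<longleftrightarrow> full_solution_in \<phi> S \<gamma>
     \<and> alpha_limit \<gamma> \<inter> S1 \<noteq> {} \<and> omega_limit \<gamma> \<inter> S2 \<noteq> {}"

definition morse_predecomposition ::
  "('a::topological_space \<Rightarrow> real \<Rightarrow> 'a) \<Rightarrow> 'a set \<Rightarrow> 'p set \<Rightarrow> ('p \<Rightarrow> 'a set) \<Rightarrow> bool" where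
  "morse_predecomposition \<phi> S P M \<longleftrightarrow>
     (\<forall>p\<in>P. \<forall>q\<in>P. p \<noteq> q \<longrightarrow> M p \<inter> M q = {})
     \<and> (\<forall>p\<in>P. closed (M p) \<and> invariant \<phi> (M p) \<and> M p \<subseteq> S)
     \<and> (\<forall>\<gamma>. full_solution_in \<phi> S \<gamma> \<longrightarrow> (\<exists>p\<in>P. \<exists>q\<in>P. is_link \<phi> S \<gamma> (M p) (M q)))"

end

theory Submission
  imports Defs
begin

lemma invariantD:
  assumes "invariant \<phi> A" "x \<in> A"
  shows "\<phi> x t \<in> A"
proof -
  have "x \<in> {x \<in> A. \<phi> x ` UNIV \<subseteq> A}" using assms unfolding invariant_def by simp
  then show ?thesis by auto
qed

lemma invariantI:
  assumes "\<And>x t. x \<in> A \<Longrightarrow> \<phi> x t \<in> A"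
  shows "invariant \<phi> A"
  unfolding invariant_def using assms by auto

lemma flow_cont:
  assumes "is_flow \<phi>"
  shows "continuous_on UNIV (\<lambda>x. \<phi> x t)"
proof -
  have c: "continuous_on UNIV (\<lambda>(x, t). \<phi> x t)" using assms unfolding is_flow_def by blast
  have "continuous_on UNIV ((\<lambda>(x, t). \<phi> x t) \<circ> (\<lambda>x. (x, t)))"
    by (rule continuous_on_compose) (auto intro!: continuous_intros continuous_on_subset[OF c])
  then show ?thesis by (simp add: o_def)
qed

lemma omega_props:
  fixes \<phi> :: "'a::metric_space \<Rightarrow> real \<Rightarrow> 'a"
  assumes fl: "is_flow \<phi>" and S: "compact S" and g: "full_solution_in \<phi> S \<gamma>"
  shows "omega_limit \<gamma> \<noteq> {} \<and> closed (omega_limit \<gamma>) \<and> invariant \<phi> (omega_limit \<gamma>)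
     \<and> omega_limit \<gamma> \<subseteq> S"
proof -
  have gs: "\<And>s t. \<gamma> (s + t) = \<phi> (\<gamma> s) t" and rg: "range \<gamma> \<subseteq> S"
    using g unfolding full_solution_in_def full_solution_def by auto
  have cS: "closed S" using S compact_imp_closed by blast
  have cl: "closed (omega_limit \<gamma>)" unfolding omega_limit_def by auto
  have sub: "omega_limit \<gamma> \<subseteq> S"
  proof -
    have "omega_limit \<gamma> \<subseteq> closure (\<gamma> ` {1..})" unfolding omega_limit_def by auto
    also have "\<dots> \<subseteq> closure S" using rg by (intro closure_mono) auto
    finally show ?thesis using cS by simp
  qed
  have ne: "omega_limit \<gamma> \<noteq> {}"
  proof -
    have h: "\<forall>n. (\<lambda>n. \<gamma> (real n)) n \<in> S" using rg by auto
    obtain l r where l: "l \<in> S" "strict_mono r" "((\<lambda>n. \<gamma> (real n)) \<circ> r) \<longlonglongrightarrow> l"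
      by (rule seq_compactE[OF compact_imp_seq_compact[OF S] h])
    have "l \<in> closure (\<gamma> ` {t..})" if "t > 0" for t
    proof (rule Lim_in_closed_set[OF _ _ _ l(3)])
      obtain N :: nat where N: "t \<le> real N" using real_arch_simple by blast
      show "\<forall>\<^sub>F n in sequentially. ((\<lambda>n. \<gamma> (real n)) \<circ> r) n \<in> closure (\<gamma> ` {t..})"
      proof (rule eventually_sequentiallyI[of N])
        fix n assume "N \<le> n"
        then have "N \<le> r n" using seq_suble[OF l(2), of n] by linarith
        then have "t \<le> real (r n)" using N by linarith
        then have "\<gamma> (real (r n)) \<in> \<gamma> ` {t..}" by (intro imageI) simp
        then show "((\<lambda>n. \<gamma> (real n)) \<circ> r) n \<in> closure (\<gamma> ` {t..})"
          unfolding o_def by (rule closure_subset[THEN subsetD])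
      qed
    qed auto
    then have "l \<in> omega_limit \<gamma>" unfolding omega_limit_def by blast
    then show ?thesis by blast
  qed
  have inv: "invariant \<phi> (omega_limit \<gamma>)"
  proof -
    have "\<phi> x t \<in> omega_limit \<gamma>" if x: "x \<in> omega_limit \<gamma>" for x t
    proof -
      have "\<phi> x t \<in> closure (\<gamma> ` {r..})" if r: "r > 0" for r
      proof -
        define s where "s = max 1 (r - t)"
        have s: "s > 0" "r \<le> s + t" unfolding s_def by auto
        have "x \<in> closure (\<gamma> ` {s..})" using x s unfolding omega_limit_def by auto
        then have "\<phi> x t \<in> (\<lambda>x. \<phi> x t) ` closure (\<gamma> ` {s..})" by blast
        also have "\<dots> \<subseteq> closure ((\<lambda>x. \<phi> x t) ` (\<gamma> ` {s..}))"
          by (rule image_closure_subset[OF continuous_on_subset[OF flow_cont[OF fl]] closed_closure closure_subset]) auto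
        also have "\<dots> \<subseteq> closure (\<gamma> ` {r..})"
        proof (rule closure_mono, rule subsetI)
          fix y assume "y \<in> (\<lambda>x. \<phi> x t) ` \<gamma> ` {s..}"
          then obtain u where u: "u \<in> {s..}" "y = \<phi> (\<gamma> u) t" by auto
          then show "y \<in> \<gamma> ` {r..}" using s gs[of u t]
            by (intro image_eqI[of _ _ "u + t"]) auto
        qed
        finally show ?thesis .
      qed
      then show ?thesis unfolding omega_limit_def by auto
    qed
    then show ?thesis by (rule invariantI)
  qed
  show ?thesis using ne cl inv sub by blast
qed

lemma alpha_props:
  fixes \<phi> :: "'a::metric_space \<Rightarrow> real \<Rightarrow> 'a"
  assumes fl: "is_flow \<phi>" and S: "compact S" and g: "full_solution_in \<phi> S \<gamma>"
  shows "alpha_limit \<gamma> \<noteq> {} \<and> closed (alpha_limit \<gamma>) \<and> invariant \<phi> (alpha_limit \<gamma>)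
     \<and> alpha_limit \<gamma> \<subseteq> S"
proof -
  have gs: "\<And>s t. \<gamma> (s + t) = \<phi> (\<gamma> s) t" and rg: "range \<gamma> \<subseteq> S"
    using g unfolding full_solution_in_def full_solution_def by auto
  have cS: "closed S" using S compact_imp_closed by blast
  have cl: "closed (alpha_limit \<gamma>)" unfolding alpha_limit_def by auto
  have sub: "alpha_limit \<gamma> \<subseteq> S"
  proof -
    have "alpha_limit \<gamma> \<subseteq> closure (\<gamma> ` {..-1})" unfolding alpha_limit_def by auto
    also have "\<dots> \<subseteq> closure S" using rg by (intro closure_mono) auto
    finally show ?thesis using cS by simp
  qed
  have ne: "alpha_limit \<gamma> \<noteq> {}"
  proof -
    have h: "\<forall>n. (\<lambda>n. \<gamma> (- real n)) n \<in> S" using rg by auto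
    obtain l r where l: "l \<in> S" "strict_mono r" "((\<lambda>n. \<gamma> (- real n)) \<circ> r) \<longlonglongrightarrow> l"
      by (rule seq_compactE[OF compact_imp_seq_compact[OF S] h])
    have "l \<in> closure (\<gamma> ` {..t})" if "t < 0" for t
    proof (rule Lim_in_closed_set[OF _ _ _ l(3)])
      obtain N :: nat where N: "- t \<le> real N" using real_arch_simple by blast
      show "\<forall>\<^sub>F n in sequentially. ((\<lambda>n. \<gamma> (- real n)) \<circ> r) n \<in> closure (\<gamma> ` {..t})"
      proof (rule eventually_sequentiallyI[of N])
        fix n assume "N \<le> n"
        then have "N \<le> r n" using seq_suble[OF l(2), of n] by linarith
        then have "- real (r n) \<le> t" using N by linarith
        then have "\<gamma> (- real (r n)) \<in> \<gamma> ` {..t}" by (intro imageI) simp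
        then show "((\<lambda>n. \<gamma> (- real n)) \<circ> r) n \<in> closure (\<gamma> ` {..t})"
          unfolding o_def by (rule closure_subset[THEN subsetD])
      qed
    qed auto
    then have "l \<in> alpha_limit \<gamma>" unfolding alpha_limit_def by blast
    then show ?thesis by blast
  qed
  have inv: "invariant \<phi> (alpha_limit \<gamma>)"
  proof -
    have "\<phi> x t \<in> alpha_limit \<gamma>" if x: "x \<in> alpha_limit \<gamma>" for x t
    proof -
      have "\<phi> x t \<in> closure (\<gamma> ` {..r})" if r: "r < 0" for r
      proof -
        define s where "s = min (-1) (r - t)"
        have s: "s < 0" "s + t \<le> r" unfolding s_def by auto
        have "x \<in> closure (\<gamma> ` {..s})" using x s unfolding alpha_limit_def by auto
        then have "\<phi> x t \<in> (\<lambda>x. \<phi> x t) ` closure (\<gamma> ` {..s})" by blast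
        also have "\<dots> \<subseteq> closure ((\<lambda>x. \<phi> x t) ` (\<gamma> ` {..s}))"
          by (rule image_closure_subset[OF continuous_on_subset[OF flow_cont[OF fl]] closed_closure closure_subset]) auto
        also have "\<dots> \<subseteq> closure (\<gamma> ` {..r})"
        proof (rule closure_mono, rule subsetI)
          fix y assume "y \<in> (\<lambda>x. \<phi> x t) ` \<gamma> ` {..s}"
          then obtain u where u: "u \<in> {..s}" "y = \<phi> (\<gamma> u) t" by auto
          then show "y \<in> \<gamma> ` {..r}" using s gs[of u t]
            by (intro image_eqI[of _ _ "u + t"]) auto
        qed
        finally show ?thesis .
      qed
      then show ?thesis unfolding alpha_limit_def by auto
    qed
    then show ?thesis by (rule invariantI)
  qed
  show ?thesis using ne cl inv sub by blast
qed

theorem proposition5p3: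
  fixes \<phi> :: "'a::metric_space \<Rightarrow> real \<Rightarrow> 'a"
    and S :: "'a set" and P :: "'p set" and M :: "'p \<Rightarrow> 'a set"
  assumes "locally compact (UNIV :: 'a set)"
    and "is_flow \<phi>"
    and "S \<noteq> {}" and "compact S" and "invariant \<phi> S"
    and "\<forall>p\<in>P. \<forall>q\<in>P. p \<noteq> q \<longrightarrow> M p \<inter> M q = {}"
    and "\<forall>p\<in>P. closed (M p) \<and> invariant \<phi> (M p) \<and> M p \<subseteq> S"
  shows "morse_predecomposition \<phi> S P M \<longleftrightarrow>
    (\<forall>T. T \<noteq> {} \<and> closed T \<and> invariant \<phi> T \<and> T \<subseteq> S \<longrightarrow> T \<inter> (\<Union>p\<in>P. M p) \<noteq> {})"
proof
  assume mp: "morse_predecomposition \<phi> S P M"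
  show "\<forall>T. T \<noteq> {} \<and> closed T \<and> invariant \<phi> T \<and> T \<subseteq> S \<longrightarrow> T \<inter> (\<Union>p\<in>P. M p) \<noteq> {}"
  proof (intro allI impI)
    fix T assume T: "T \<noteq> {} \<and> closed T \<and> invariant \<phi> T \<and> T \<subseteq> S"
    then obtain x where x: "x \<in> T" by blast
    have iT: "invariant \<phi> T" using T by blast
    have rT: "range (\<phi> x) \<subseteq> T" using invariantD[OF iT x] by blast
    have "full_solution \<phi> (\<phi> x)" using assms(2) unfolding is_flow_def full_solution_def by simp
    then have fs: "full_solution_in \<phi> S (\<phi> x)" using rT T unfolding full_solution_in_def by blast
    have L: "\<forall>\<gamma>. full_solution_in \<phi> S \<gamma> \<longrightarrow> (\<exists>p\<in>P. \<exists>q\<in>P. is_link \<phi> S \<gamma> (M p) (M q))"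
      using mp unfolding morse_predecomposition_def by (elim conjE)
    obtain p q where pq: "p \<in> P" "q \<in> P" "is_link \<phi> S (\<phi> x) (M p) (M q)"
      using L fs by blast
    have "omega_limit (\<phi> x) \<subseteq> closure (\<phi> x ` {1..})" unfolding omega_limit_def by auto
    also have "\<dots> \<subseteq> closure T" using rT by (intro closure_mono) auto
    finally have "omega_limit (\<phi> x) \<subseteq> T" using T by simp
    then show "T \<inter> (\<Union>p\<in>P. M p) \<noteq> {}" using pq unfolding is_link_def by blast
  qed
next
  assume H: "\<forall>T. T \<noteq> {} \<and> closed T \<and> invariant \<phi> T \<and> T \<subseteq> S \<longrightarrow> T \<inter> (\<Union>p\<in>P. M p) \<noteq> {}"
  have "\<exists>p\<in>P. \<exists>q\<in>P. is_link \<phi> S \<gamma> (M p) (M q)" if g: "full_solution_in \<phi> S \<gamma>" for \<gamma>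
  proof -
    have "alpha_limit \<gamma> \<inter> (\<Union>p\<in>P. M p) \<noteq> {}"
      by (rule H[rule_format]) (use alpha_props[OF assms(2) assms(4) g] in blast)
    then obtain p where p: "p \<in> P" "alpha_limit \<gamma> \<inter> M p \<noteq> {}" by auto
    have "omega_limit \<gamma> \<inter> (\<Union>p\<in>P. M p) \<noteq> {}"
      by (rule H[rule_format]) (use omega_props[OF assms(2) assms(4) g] in blast)
    then obtain q where q: "q \<in> P" "omega_limit \<gamma> \<inter> M q \<noteq> {}" by auto
    show ?thesis using p q g unfolding is_link_def by blast
  qed
  then show "morse_predecomposition \<phi> S P M"
    unfolding morse_predecomposition_def using assms(6,7) by (intro conjI) blast+
qed

end
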